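(* Let $X$ be a finite set with $|X|=n$, $0\notin X$, $W=X\cup\{0\}$. Let $\mathfrak{V}$ be a $\big(\binom{n}{2}_{\,n-2}\ \binom{n}{3}_{\,3}\big)$-configuration whose point set is $\mathcal{P}_2(X)$, and let $\mathfrak{M}$ be the structure with point set $\mathcal{P}_2(W)$ whose lines are the lines of $\mathfrak{V}$ together with all sets $\{\{0,x\},\{0,y\},\{x,y\}\}$ for distinct $x,y\in X$. If $H$ is a hyperplane of $\mathfrak{M}$, then there is a subset $A$ of $W$ such that $H=\mathcal{H}(A\,|\,W\setminus A):=\mathcal{P}_2(A)\cup\mathcal{P}_2(W\setminus A)$.
   Context: $\mathcal{P}_2(Y)$ denotes the set of $2$-element subsets of $Y$. A $(v_r\ b_k)$-configuration is a partial linear space with $v$ points and $b$ lines, each point on exactly $r$ lines and each line containing exactly $k$ points. (Every binomial partial Steiner triple system with $\binom{n+1}{2}$ points freely containing a complete graph $K_n$ is isomorphic to such an $\mathfrak{M}$.) A subspace is a set of points containing every line that meets it in at least two points; a hyperplane is a proper subspace meeting every line. *)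

theory Defs
  imports Main
begin

definition P2 :: "'a set \<Rightarrow> 'a set set" where
  "P2 Y = {e. e \<subseteq> Y \<and> card e = 2}"

definition partial_linear_space :: "'p set \<Rightarrow> 'p set set \<Rightarrow> bool" where
  "partial_linear_space P L \<longleftrightarrow>
     (\<forall>l\<in>L. l \<subseteq> P \<and> 2 \<le> card l) \<and>
     (\<forall>l\<in>L. \<forall>m\<in>L. l \<noteq> m \<longrightarrow> card (l \<inter> m) \<le> 1)"

definition configuration :: "'p set \<Rightarrow> 'p set set \<Rightarrow> nat \<Rightarrow> nat \<Rightarrow> nat \<Rightarrow> nat \<Rightarrow> bool" where
  "configuration P L v r b k \<longleftrightarrow>
     partial_linear_space P L \<and> finite P \<and> finite L \<and>
     card P = v \<and> card L = b \<and>
     (\<forall>p\<in>P. card {l\<in>L. p \<in> l} = r) \<and>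
     (\<forall>l\<in>L. card l = k)"

definition subspace :: "'p set \<Rightarrow> 'p set set \<Rightarrow> 'p set \<Rightarrow> bool" where
  "subspace P L S \<longleftrightarrow> S \<subseteq> P \<and> (\<forall>l\<in>L. 2 \<le> card (l \<inter> S) \<longrightarrow> l \<subseteq> S)"

definition hyperplane :: "'p set \<Rightarrow> 'p set set \<Rightarrow> 'p set \<Rightarrow> bool" where
  "hyperplane P L H \<longleftrightarrow> subspace P L H \<and> H \<noteq> P \<and> (\<forall>l\<in>L. l \<inter> H \<noteq> {})"

definition M_lines :: "'a \<Rightarrow> 'a set \<Rightarrow> 'a set set set \<Rightarrow> 'a set set set" where
  "M_lines z X L = L \<union> {{{z, x}, {z, y}, {x, y}} | x y. x \<in> X \<and> y \<in> X \<and> x \<noteq> y}"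

end

theory Submission
  imports Defs
begin

lemma tri_facts:
  assumes z: "z \<notin> X" and x: "x \<in> X" and y: "y \<in> X" and xy: "x \<noteq> y"
    and hyp: "hyperplane (P2 (insert z X)) (M_lines z X L) H"
  shows "({z,x}\<in>H \<and> {z,y}\<in>H \<longrightarrow> {x,y}\<in>H)
       \<and> ({z,x}\<in>H \<and> {x,y}\<in>H \<longrightarrow> {z,y}\<in>H)
       \<and> ({z,x}\<notin>H \<and> {z,y}\<notin>H \<longrightarrow> {x,y}\<in>H)"
proof -
  let ?T = "{{z,x},{z,y},{x,y}}"
  have T: "?T \<in> M_lines z X L" unfolding M_lines_def using x y xy by blast
  have meet: "?T \<inter> H \<noteq> {}" using hyp T unfolding hyperplane_def by blast
  have sub: "2 \<le> card (?T \<inter> H) \<Longrightarrow> ?T \<subseteq> H"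
    using hyp T unfolding hyperplane_def subspace_def by blast
  have d1: "{z,x} \<noteq> {z,y}" using xy by (auto simp: doubleton_eq_iff)
  have d2: "{z,x} \<noteq> {x,y}" using z x y xy by (auto simp: doubleton_eq_iff)
  have d3: "{z,y} \<noteq> {x,y}" using z x y xy by (auto simp: doubleton_eq_iff)
  have two: "p \<in> ?T \<inter> H \<Longrightarrow> q \<in> ?T \<inter> H \<Longrightarrow> p \<noteq> q \<Longrightarrow> 2 \<le> card (?T \<inter> H)" for p q
  proof -
    assume a: "p \<in> ?T \<inter> H" "q \<in> ?T \<inter> H" "p \<noteq> q"
    have "card {p,q} \<le> card (?T \<inter> H)" by (rule card_mono) (use a in auto)
    thus ?thesis using a by simp
  qed
  show ?thesis
  proof (intro conjI impI)
    assume "{z,x}\<in>H \<and> {z,y}\<in>H" thus "{x,y}\<in>H" using two[of "{z,x}" "{z,y}"] sub d1 by auto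
  next
    assume "{z,x}\<in>H \<and> {x,y}\<in>H" thus "{z,y}\<in>H" using two[of "{z,x}" "{x,y}"] sub d2 by auto
  next
    assume "{z,x}\<notin>H \<and> {z,y}\<notin>H" thus "{x,y}\<in>H" using meet by auto
  qed
qed

theorem theorem3p5:
  fixes X :: "'a set" and z :: 'a and n :: nat
    and L :: "'a set set set" and H :: "'a set set"
  assumes "finite X" and "card X = n" and "z \<notin> X"
    and "configuration (P2 X) L (n choose 2) (n - 2) (n choose 3) 3"
    and "hyperplane (P2 (insert z X)) (M_lines z X L) H"
  shows "\<exists>A. A \<subseteq> insert z X \<and> H = P2 A \<union> P2 (insert z X - A)"
proof -
  let ?W = "insert z X"
  define A where "A = insert z {x\<in>X. {z,x} \<in> H}"
  have HW: "H \<subseteq> P2 ?W" using assms(5) unfolding hyperplane_def subspace_def by blast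
  have tf: "\<And>x y. x \<in> X \<Longrightarrow> y \<in> X \<Longrightarrow> x \<noteq> y \<Longrightarrow>
       ({z,x}\<in>H \<and> {z,y}\<in>H \<longrightarrow> {x,y}\<in>H)
       \<and> ({z,x}\<in>H \<and> {x,y}\<in>H \<longrightarrow> {z,y}\<in>H)
       \<and> ({z,x}\<notin>H \<and> {z,y}\<notin>H \<longrightarrow> {x,y}\<in>H)"
    using tri_facts[OF assms(3) _ _ _ assms(5)] by blast
  have inA: "\<And>x. x \<in> X \<Longrightarrow> x \<in> A \<longleftrightarrow> {z,x} \<in> H" using assms(3) unfolding A_def by auto
  have key: "e \<in> H \<longleftrightarrow> e \<in> P2 A \<union> P2 (?W - A)" if e: "e \<in> P2 ?W" for e
  proof -
    from e obtain a b where ab: "e = {a,b}" "a \<noteq> b" "a \<in> ?W" "b \<in> ?W"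
      unfolding P2_def by (auto simp: card_2_iff)
    have P2e: "e \<in> P2 S \<longleftrightarrow> a \<in> S \<and> b \<in> S" for S
      using ab unfolding P2_def by auto
    show ?thesis
    proof (cases "a = z")
      case True
      then have b: "b \<in> X" using ab(2,4) by simp
      have "z \<in> A" "z \<notin> ?W - A" unfolding A_def by auto
      then show ?thesis unfolding Un_iff P2e unfolding ab(1) True inA[OF b] by simp
    next
      case az: False
      show ?thesis
      proof (cases "b = z")
        case True
        then have a: "a \<in> X" using ab(3) az by simp
        have "z \<in> A" "z \<notin> ?W - A" unfolding A_def by auto
        then show ?thesis unfolding Un_iff P2e unfolding ab(1) True inA[OF a] by (simp add: insert_commute)
      next
        case bz: False
        have a: "a \<in> X" and b: "b \<in> X" using ab(3,4) az bz by simp_all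
        have t1: "({z,a}\<in>H \<and> {z,b}\<in>H \<longrightarrow> {a,b}\<in>H)
       \<and> ({z,a}\<in>H \<and> {a,b}\<in>H \<longrightarrow> {z,b}\<in>H)
       \<and> ({z,a}\<notin>H \<and> {z,b}\<notin>H \<longrightarrow> {a,b}\<in>H)" using tf[OF a b ab(2)] .
        have t2: "({z,b}\<in>H \<and> {b,a}\<in>H \<longrightarrow> {z,a}\<in>H)" using tf[OF b a] ab(2) by blast
        have ba: "{b,a} = {a,b}" by (rule insert_commute)
        have nW: "\<And>x. x \<in> X \<Longrightarrow> x \<in> ?W - A \<longleftrightarrow> {z,x} \<notin> H" using inA by auto
        have t2': "{z,b}\<in>H \<and> {a,b}\<in>H \<longrightarrow> {z,a}\<in>H" using t2 ba by simp
        show ?thesis unfolding Un_iff P2e unfolding ab(1) inA[OF a] inA[OF b] nW[OF a] nW[OF b]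
          using t1 t2' by argo
      qed
    qed
  qed
  have "A \<subseteq> ?W" unfolding A_def by auto
  moreover have "P2 A \<union> P2 (?W - A) \<subseteq> P2 ?W" using \<open>A \<subseteq> ?W\<close> unfolding P2_def by auto
  ultimately show ?thesis using key HW by blast
qed

end
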